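(* Let $\alpha,\beta$ be positive integers and let $h$ be a real-valued function differentiable on an open neighbourhood of $\mathcal{U}_2$ in $\mathbb{C}^{2\times2}$, with $h(\Psi D)=h(\Psi)$ for all $\Psi\in\mathcal{U}_2$ and diagonal unitary $D$, such that $h(\Psi(\theta,\phi))=z_{\alpha,\beta}(\theta,\phi)^TMz_{\alpha,\beta}(\theta,\phi)+C$ for all $\theta,\phi\in\mathbb{R}$, for some real symmetric $M\in\mathbb{R}^{3\times3}$ and $C\in\mathbb{R}$. Let $\lambda_1\ge\lambda_2\ge\lambda_3$ be the eigenvalues of $M$, and assume $\frac{\lambda_2-\lambda_3}{\lambda_1-\lambda_3}\le1-\varepsilon$ for some $\varepsilon>0$. Let $w$ be a unit eigenvector of $M$ for $\lambda_1$ with $w_1\ge0$, let $\theta_*\in[0,\pi/(2\alpha)]$, $\phi_*\in\mathbb{R}$ satisfy $z_{\alpha,\beta}(\theta_*,\phi_* )=w$, and $\Psi_*=\Psi(\theta_*,\phi_* )$. Then $$h(\Psi_* )-h(I_2)\ge\frac{\varepsilon}{4\alpha}\,\|\operatorname{grad}h(I_2)\|\,\|\Psi_*-I_2\|.$$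
   Context: $\mathcal{U}_2$ is the group of $2\times2$ unitary matrices; $\|\cdot\|$ the Frobenius norm; $\mathbb{C}^{2\times2}$ carries the real inner product $\mathrm{Re}\,\mathrm{tr}(X^HY)$; $\nabla h=\partial h/\partial X^{\Re}+\mathrm{i}\,\partial h/\partial X^{\Im}$ and $\operatorname{grad}h(U)=U\,\mathrm{skew}(U^H\nabla h(U))$ with $\mathrm{skew}(P)=\frac12(P-P^H)$. $\Psi(\theta,\phi)=\begin{bmatrix}\cos\theta&-\sin\theta e^{\mathrm{i}\phi}\\ \sin\theta e^{-\mathrm{i}\phi}&\cos\theta\end{bmatrix}$ and $z_{\alpha,\beta}(\theta,\phi)=(\cos\alpha\theta,-\sin\alpha\theta\cos\beta\phi,-\sin\alpha\theta\sin\beta\phi)^T$. *)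

theory Defs
  imports "HOL-Analysis.Analysis"
begin

type_synonym cmat2 = "complex^2^2"

definition adjoint2 :: "cmat2 \<Rightarrow> cmat2" where
  "adjoint2 A = (\<chi> i j. cnj (A $ j $ i))"

definition unitary2 :: "cmat2 set" where
  "unitary2 = {U. adjoint2 U ** U = mat 1}"

definition diag_unitary2 :: "cmat2 set" where
  "diag_unitary2 = {D. D \<in> unitary2 \<and> (\<forall>i j. i \<noteq> j \<longrightarrow> D $ i $ j = 0)}"

definition skew2 :: "cmat2 \<Rightarrow> cmat2" where
  "skew2 P = (1/2 :: real) *\<^sub>R (P - adjoint2 P)"

definition matE :: "2 \<Rightarrow> 2 \<Rightarrow> complex \<Rightarrow> cmat2" where
  "matE i j c = (\<chi> k l. if k = i \<and> l = j then c else 0)"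

definition egrad :: "(cmat2 \<Rightarrow> real) \<Rightarrow> cmat2 \<Rightarrow> cmat2" where
  "egrad h U = (\<chi> i j. Complex (frechet_derivative h (at U) (matE i j 1))
                                (frechet_derivative h (at U) (matE i j \<i>)))"

definition rgrad :: "(cmat2 \<Rightarrow> real) \<Rightarrow> cmat2 \<Rightarrow> cmat2" where
  "rgrad h U = U ** skew2 (adjoint2 U ** egrad h U)"

definition Psi :: "real \<Rightarrow> real \<Rightarrow> cmat2" where
  "Psi \<theta> \<phi> = (\<chi> i j.
     if i = 1 \<and> j = 1 then complex_of_real (cos \<theta>)
     else if i = 1 \<and> j = 2 then - complex_of_real (sin \<theta>) * cis \<phi>
     else if i = 2 \<and> j = 1 then complex_of_real (sin \<theta>) * cis (- \<phi>)
     else complex_of_real (cos \<theta>))"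

definition zab :: "nat \<Rightarrow> nat \<Rightarrow> real \<Rightarrow> real \<Rightarrow> real^3" where
  "zab \<alpha> \<beta> \<theta> \<phi> = (\<chi> k.
     if k = 1 then cos (real \<alpha> * \<theta>)
     else if k = 2 then - sin (real \<alpha> * \<theta>) * cos (real \<beta> * \<phi>)
     else - sin (real \<alpha> * \<theta>) * sin (real \<beta> * \<phi>))"

end

theory Submission
  imports Defs
begin

lemma core:
 fixes m11 m12 m13 m22 m23 m33 l1 l2 l3 \<epsilon> c s a b :: real
 assumes e1: "m11 * c - m12 * s * a - m13 * s * b = l1 * c"
   and e2: "m12 * c - m22 * s * a - m23 * s * b = - l1 * s * a"
   and e3: "m13 * c - m23 * s * a - m33 * s * b = - l1 * s * b"
   and hcs: "c^2+s^2 = 1" and hab: "a^2+b^2=1"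
   and det: "\<And>t. (m11-t) * (m22-t) * (m33-t) + m12 * m23 * m13 + m13 * m12 * m23 - (m11-t) * m23 * m23 - m12 * m12 * (m33-t) - m13 * (m22-t) * m13
      = (l1-t) * (l2-t) * (l3-t)"
   and l12: "l1 \<ge> l2" and l23: "l2 \<ge> l3" and ep: "\<epsilon> > 0" and rat: "(l2 - l3) / (l1 - l3) \<le> 1 - \<epsilon>"
   and c0: "c \<ge> 0"
 shows "l1 - m11 \<ge> 0 \<and> (l1 - m11)^2 \<ge> \<epsilon>^2 * (m12^2 + m13^2) * (1 - c)"
proof -
  define mu where "mu = s * (m11 * s + m12 * (c * a) + m13 * (c * b)) + c * a * (m12 * s + m22 * (c * a) + m23 * (c * b)) + c * b * (m13 * s + m23 * (c * a) + m33 * (c * b))"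
  define nu where "nu = - b * (m12 * s + m22 * (c * a) + m23 * (c * b)) + a * (m13 * s + m23 * (c * a) + m33 * (c * b))"
  define mu' where "mu' = - b * (m22 * - b + m23 * a) + a * (m23 * - b + m33 * a)"
  have key: "\<And>t. (m11-t) * (m22-t) * (m33-t) + m12 * m23 * m13 + m13 * m12 * m23 - (m11-t) * m23 * m23 - m12 * m12 * (m33-t) - m13 * (m22-t) * m13
   = (l1-t) * ((mu-t) * (mu'-t) - nu^2)"
    using e1 e2 e3 hcs hab unfolding mu_def nu_def mu'_def by algebra
  have F1: "m11 = c^2 * l1 + s^2 * mu"
    using e1 e2 e3 hcs hab unfolding mu_def by algebra
  have F2: "m12^2 + m13^2 = s^2 * (c^2 * (l1 - mu)^2 + nu^2)"
    using e1 e2 e3 hcs hab unfolding mu_def nu_def by algebra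
  have q: "(mu-t) * (mu'-t) - nu^2 = (l2-t) * (l3-t)" if "t \<noteq> l1" for t
  proof -
    have "(l1-t) * ((mu-t) * (mu'-t) - nu^2) = (l1-t) * ((l2-t) * (l3-t))"
      using key[of t] det[of t] by (simp add: mult.assoc)
    then show ?thesis using that by simp
  qed
  have q1: "(mu-(l1+1)) * (mu'-(l1+1)) - nu^2 = (l2-(l1+1)) * (l3-(l1+1))" by (rule q) simp
  have q2: "(mu-(l1+2)) * (mu'-(l1+2)) - nu^2 = (l2-(l1+2)) * (l3-(l1+2))" by (rule q) simp
  have sum: "mu + mu' = l2 + l3" using q1 q2 by (simp add: algebra_simps) 
  have nu2: "nu^2 = (l2 - mu) * (mu - l3)"
    using q1 sum by algebra
  have mul2: "mu \<le> l2"
  proof (rule ccontr)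
    assume "\<not> mu \<le> l2"
    then have "(l2 - mu) * (mu - l3) < 0" using l23 by (intro mult_neg_pos) auto
    then show False using nu2 by (metis not_less zero_le_power2)
  qed
  have mul3: "mu \<ge> l3"
  proof (rule ccontr)
    assume "\<not> mu \<ge> l3"
    then have "(l2 - mu) * (mu - l3) < 0" using l23 by (intro mult_pos_neg) auto
    then show False using nu2 by (metis not_less zero_le_power2)
  qed
  define d where "d = l1 - mu"
  have d0: "d \<ge> 0" using mul2 l12 unfolding d_def by simp
  have s2: "s^2 = (1 - c) * (1 + c)" using hcs by (simp add: algebra_simps power2_eq_square)
  have c1: "c \<le> 1" proof - have "c^2 \<le> 1" using hcs by (smt (verit) zero_le_power2) then show ?thesis by (metis abs_square_le_1 abs_le_D1) qed
  have lhs: "l1 - m11 = s^2 * d" using F1 hcs unfolding d_def by algebra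
  have r2: "m12^2 + m13^2 = s^2 * (c^2 * d^2 + nu^2)" using F2 unfolding d_def .
  have ep1: "\<epsilon> \<le> 1"
  proof -
    have "(l2 - l3) / (l1 - l3) \<ge> 0" using l12 l23 by simp
    then show ?thesis using rat by simp
  qed
  have kk: "\<epsilon>^2 * (c^2 * d^2 + nu^2) \<le> (1 + c) * d^2"
  proof (cases "l1 = l3")
    case True
    then have "l2 = l1" "l3 = l1" using l12 l23 by auto
    then have "nu^2 + (l1 - mu)^2 = 0" using nu2 by (simp add: power2_eq_square algebra_simps)
    then have "nu^2 = 0" "d = 0" unfolding d_def by (smt (verit) zero_le_power2 power_eq_0_iff)+
    then show ?thesis by simp
  next
    case False
    then have pos: "l1 - l3 > 0" using l12 l23 by simp
    have "l2 - l3 \<le> (1 - \<epsilon>) * (l1 - l3)" using rat pos by (simp add: divide_le_eq)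
    then have A: "\<epsilon> * (mu - l3) \<le> d - \<epsilon> * d" unfolding d_def using l12 mul2 by (simp add: algebra_simps)
    have B: "\<epsilon> * nu^2 \<le> \<epsilon> * d * (mu - l3)"
      unfolding nu2 d_def using ep mul3 l12 by (simp add: mult_right_mono)
    have "\<epsilon> * d * (mu - l3) \<le> d * (d - \<epsilon> * d)" using A d0 by (metis mult.assoc mult.left_commute mult_left_mono)
    with B have C: "\<epsilon> * nu^2 \<le> d^2 * (1 - \<epsilon>)" by (simp add: algebra_simps power2_eq_square)
    have D: "\<epsilon>^2 * nu^2 \<le> \<epsilon> * d^2 * (1 - \<epsilon>)" using C ep
      by (metis mult.assoc mult_left_mono less_imp_le power2_eq_square)
    have E: "\<epsilon>^2 * (c^2 * d^2) \<le> \<epsilon>^2 * d^2"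
    proof -
      have "c^2 \<le> 1" using c0 c1 by (simp add: power_le_one)
      then show ?thesis by (metis mult.assoc mult_left_mono mult_right_mono mult_1 zero_le_power2 mult.commute)
    qed
    have "\<epsilon>^2 * d^2 + \<epsilon> * d^2 * (1 - \<epsilon>) = \<epsilon> * d^2" by (simp add: algebra_simps power2_eq_square)
    also have "\<dots> \<le> d^2" using ep1 ep by (intro mult_left_le_one_le) auto
    also have "\<dots> \<le> (1 + c) * d^2" using c0 by (simp add: algebra_simps)
    finally show ?thesis using D E by (simp add: algebra_simps)
  qed
  have "\<epsilon>^2 * (m12^2 + m13^2) * (1 - c) = s^2 * (1 - c) * (\<epsilon>^2 * (c^2 * d^2 + nu^2))"
    unfolding r2 by (simp add: algebra_simps)
  also have "\<dots> \<le> s^2 * (1 - c) * ((1 + c) * d^2)"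
    using kk c1 by (intro mult_left_mono) auto
  also have "\<dots> = (l1 - m11)^2" unfolding lhs s2 by (simp add: algebra_simps power2_eq_square)
  finally show ?thesis using lhs d0 by simp
qed

definition Kp :: "real \<Rightarrow> cmat2" where
  "Kp \<phi> = (\<chi> i j. if i = 1 \<and> j = 2 then - cis \<phi> else if i = 2 \<and> j = 1 then cis (- \<phi>) else 0)"

lemma Psi_decomp: "Psi t \<phi> = cos t *\<^sub>R mat 1 + sin t *\<^sub>R Kp \<phi>"
  unfolding Psi_def Kp_def
  by (simp add: vec_eq_iff forall_2 mat_def complex_eq_iff)

lemma Psi_00: "Psi 0 \<phi> = mat 1"
  by (simp add: Psi_decomp)

lemma Psi_deriv: "((\<lambda>t. Psi t \<phi>) has_derivative (\<lambda>x. x *\<^sub>R Kp \<phi>)) (at 0)"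
proof -
  have "((\<lambda>t. cos t *\<^sub>R mat 1 + sin t *\<^sub>R Kp \<phi>) has_derivative (\<lambda>x. x *\<^sub>R (- sin 0 *\<^sub>R mat 1 + cos 0 *\<^sub>R Kp \<phi>))) (at 0)"
    by (auto intro!: derivative_eq_intros simp: algebra_simps)
  then show ?thesis by (simp add: Psi_decomp)
qed

lemma norm_cmat2_sq: "norm (X::cmat2) ^ 2 = cmod (X$1$1)^2 + cmod (X$1$2)^2 + cmod (X$2$1)^2 + cmod (X$2$2)^2"
  by (simp add: norm_vec_def L2_set_def sum_2)

lemma zab_quad:
  assumes "M$2$1 = M$1$2" "M$3$1 = M$1$3" "M$3$2 = M$2$3"
  shows "zab \<alpha> \<beta> t \<phi> \<bullet> (M *v zab \<alpha> \<beta> t \<phi>) =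
    M$1$1 * cos (\<alpha>*t)^2 - 2 * M$1$2 * cos (\<alpha>*t) * sin (\<alpha>*t) * cos (\<beta>*\<phi>)
    - 2 * M$1$3 * cos (\<alpha>*t) * sin (\<alpha>*t) * sin (\<beta>*\<phi>)
    + M$2$2 * sin (\<alpha>*t)^2 * cos (\<beta>*\<phi>)^2 + 2 * M$2$3 * sin (\<alpha>*t)^2 * cos (\<beta>*\<phi>) * sin (\<beta>*\<phi>)
    + M$3$3 * sin (\<alpha>*t)^2 * sin (\<beta>*\<phi>)^2"
  using assms
  by (simp add: inner_vec_def matrix_vector_mult_def zab_def sum_3 algebra_simps power2_eq_square)

lemma quad_deriv:
  "((\<lambda>t. m11 * cos (\<alpha>*t)^2 - 2 * m12 * cos (\<alpha>*t) * sin (\<alpha>*t) * a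
    - 2 * m13 * cos (\<alpha>*t) * sin (\<alpha>*t) * b
    + m22 * sin (\<alpha>*t)^2 * a^2 + 2 * m23 * sin (\<alpha>*t)^2 * a * b
    + m33 * sin (\<alpha>*t)^2 * b^2 + C) has_real_derivative (- 2 * \<alpha> * (m12 * a + m13 * b))) (at (0::real))"
  by (auto intro!: derivative_eq_intros simp: algebra_simps)

lemma dir_deriv:
  assumes hd: "(h has_derivative D) (at (mat 1))" and hF: "\<And>t. h (Psi t \<phi>) = F t"
    and Fd: "(F has_real_derivative F') (at 0)"
  shows "D (Kp \<phi>) = F'"
proof -
  have "((h \<circ> (\<lambda>t. Psi t \<phi>)) has_derivative (D \<circ> (\<lambda>x. x *\<^sub>R Kp \<phi>))) (at 0)"
    by (rule diff_chain_at[OF Psi_deriv]) (simp add: Psi_00 hd)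
  moreover have "h \<circ> (\<lambda>t. Psi t \<phi>) = F" using hF by (simp add: fun_eq_iff)
  ultimately have "(F has_derivative (D \<circ> (\<lambda>x. x *\<^sub>R Kp \<phi>))) (at 0)" by simp
  moreover have "(F has_derivative (\<lambda>x. F' * x)) (at 0)" using Fd by (simp add: has_field_derivative_def)
  ultimately have "(D \<circ> (\<lambda>x. x *\<^sub>R Kp \<phi>)) = (\<lambda>x. F' * x)" by (rule has_derivative_unique)
  then show ?thesis by (metis comp_apply mult_1_right scaleR_one)
qed

definition Dg :: "2 \<Rightarrow> real \<Rightarrow> cmat2" where
  "Dg k t = (\<chi> i j. if i = j then (if i = k then cis t else 1) else 0)"

lemma Dg_diag: "Dg k t \<in> diag_unitary2"
proof -
  have "adjoint2 (Dg k t) ** Dg k t = mat 1"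
    using exhaust_2[of k]
    by (auto simp: adjoint2_def Dg_def matrix_matrix_mult_def sum_2 vec_eq_iff forall_2 mat_def cis_cnj cis_mult)
  then show ?thesis unfolding diag_unitary2_def unitary2_def by (auto simp: Dg_def)
qed

lemma mat1_unitary: "mat 1 \<in> unitary2"
  by (simp add: unitary2_def adjoint2_def vec_eq_iff forall_2 mat_def matrix_matrix_mult_def sum_2)

lemma Dg_decomp: "Dg k t = mat 1 + (cos t - 1) *\<^sub>R matE k k 1 + sin t *\<^sub>R matE k k \<i>"
  using exhaust_2[of k]
  by (auto simp: Dg_def matE_def vec_eq_iff forall_2 mat_def complex_eq_iff)

lemma diag_deriv:
  assumes hd: "(h has_derivative D) (at (mat 1))"
    and inv: "\<And>P E. P \<in> unitary2 \<Longrightarrow> E \<in> diag_unitary2 \<Longrightarrow> h (P ** E) = h P"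
  shows "D (matE k k \<i>) = 0"
proof -
  have cd: "((\<lambda>t. Dg k t) has_derivative (\<lambda>x. x *\<^sub>R matE k k \<i>)) (at 0)"
  proof -
    have "((\<lambda>t. mat 1 + (cos t - 1) *\<^sub>R matE k k 1 + sin t *\<^sub>R matE k k \<i>) has_derivative
       (\<lambda>x. x *\<^sub>R (- sin 0 *\<^sub>R matE k k 1 + cos 0 *\<^sub>R matE k k \<i>))) (at 0)"
      by (auto intro!: derivative_eq_intros simp: algebra_simps)
    then show ?thesis by (simp add: Dg_decomp)
  qed
  have d0: "Dg k 0 = mat 1" by (simp add: Dg_decomp)
  have "((h \<circ> (\<lambda>t. Dg k t)) has_derivative (D \<circ> (\<lambda>x. x *\<^sub>R matE k k \<i>))) (at 0)"
    by (rule diff_chain_at[OF cd]) (simp add: d0 hd)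
  moreover have "h \<circ> (\<lambda>t. Dg k t) = (\<lambda>t. h (mat 1))"
    using inv[OF mat1_unitary Dg_diag] by (simp add: fun_eq_iff)
  ultimately have "((\<lambda>t. h (mat 1)) has_derivative (D \<circ> (\<lambda>x. x *\<^sub>R matE k k \<i>))) (at 0)" by simp
  moreover have "((\<lambda>t::real. h (mat 1)) has_derivative (\<lambda>x. 0)) (at 0)" by simp
  ultimately have "(D \<circ> (\<lambda>x. x *\<^sub>R matE k k \<i>)) = (\<lambda>x. 0)" by (rule has_derivative_unique)
  then show ?thesis by (metis comp_apply scaleR_one)
qed

lemma adjoint_mat1: "adjoint2 (mat 1) = mat 1"
  by (simp add: adjoint2_def vec_eq_iff mat_def)

lemma grad_norm:
  assumes hd: "(h has_derivative D) (at (mat 1))"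
    and z1: "D (matE 1 1 \<i>) = 0" and z2: "D (matE 2 2 \<i>) = 0"
  shows "norm (rgrad h (mat 1))^2 = (D (Kp 0)^2 + D (Kp (- pi/2))^2) / 2"
proof -
  have fd: "frechet_derivative h (at (mat 1)) = D" using hd by (metis frechet_derivative_at)
  have lin: "linear D" using hd has_derivative_linear by blast
  define a where "a i j = D (matE i j 1)" for i j
  define b where "b i j = D (matE i j \<i>)" for i j
  have G: "rgrad h (mat 1) $ i $ j = Complex ((a i j - a j i)/2) ((b i j + b j i)/2)" for i j
    unfolding rgrad_def adjoint_mat1 matrix_mul_lid skew2_def egrad_def fd a_def b_def
    by (simp add: adjoint2_def complex_eq_iff)
  have k0: "Kp 0 = matE 2 1 1 - matE 1 2 1"
    by (simp add: Kp_def matE_def vec_eq_iff forall_2)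
  have k1: "Kp (- pi/2) = matE 1 2 \<i> + matE 2 1 \<i>"
    by (simp add: Kp_def matE_def vec_eq_iff forall_2 cis.ctr complex_eq_iff)
  have d0: "D (Kp 0) = a 2 1 - a 1 2" unfolding k0 a_def using lin by (simp add: linear_diff)
  have d1: "D (Kp (- pi/2)) = b 1 2 + b 2 1" unfolding k1 b_def using lin by (simp add: linear_add)
  show ?thesis
    unfolding norm_cmat2_sq G cmod_power2 d0 d1 using z1 z2 unfolding b_def[symmetric]
    by (simp add: power2_eq_square algebra_simps)
qed

lemma Psi_dist: "norm (Psi t \<phi> - mat 1)^2 = 4 - 4 * cos t"
  unfolding norm_cmat2_sq apply (simp add: Psi_def mat_def norm_mult cmod_power2 Re_divide Im_divide)
  using sin_cos_squared_add3[of t] by algebra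


theorem lemma4p4:
  fixes \<alpha> \<beta> :: nat and h :: "cmat2 \<Rightarrow> real" and M :: "real^3^3" and C :: real
    and l1 l2 l3 \<epsilon> :: real and w :: "real^3" and \<theta>s \<phi>s :: real
  assumes "\<alpha> > 0" and "\<beta> > 0"
    and "\<exists>S. open S \<and> unitary2 \<subseteq> S \<and> (\<forall>X\<in>S. h differentiable (at X))"
    and "\<And>P D. P \<in> unitary2 \<Longrightarrow> D \<in> diag_unitary2 \<Longrightarrow> h (P ** D) = h P"
    and "transpose M = M"
    and "\<And>\<theta> \<phi>. h (Psi \<theta> \<phi>) = zab \<alpha> \<beta> \<theta> \<phi> \<bullet> (M *v zab \<alpha> \<beta> \<theta> \<phi>) + C"
    and "\<And>t. det (M - t *\<^sub>R mat 1) = (l1 - t) * (l2 - t) * (l3 - t)"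
    and "l1 \<ge> l2" and "l2 \<ge> l3"
    and "\<epsilon> > 0" and "(l2 - l3) / (l1 - l3) \<le> 1 - \<epsilon>"
    and "M *v w = l1 *\<^sub>R w" and "norm w = 1" and "w $ 1 \<ge> 0"
    and "0 \<le> \<theta>s" and "\<theta>s \<le> pi / (2 * real \<alpha>)"
    and "zab \<alpha> \<beta> \<theta>s \<phi>s = w"
  shows "h (Psi \<theta>s \<phi>s) - h (mat 1)
           \<ge> \<epsilon> / (4 * real \<alpha>) * norm (rgrad h (mat 1)) * norm (Psi \<theta>s \<phi>s - mat 1)"
proof -
  note A = assms
  obtain S where S: "open S" "unitary2 \<subseteq> S" "\<forall>X\<in>S. h differentiable (at X)" using A(3) by blast
  have "h differentiable (at (mat 1))" using S mat1_unitary by blast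
  then have hd: "(h has_derivative frechet_derivative h (at (mat 1))) (at (mat 1))"
    by (rule frechet_derivative_works[THEN iffD1])
  define D where "D = frechet_derivative h (at (mat 1))"
  note hd = hd[folded D_def]
  have sym: "M $ j $ i = M $ i $ j" for i j
  proof -
    have "(transpose M)$i$j = M$i$j" using A(5) by simp
    then show ?thesis by (simp add: transpose_def)
  qed
  define m11 where "m11 = M$1$1"
  define m12 where "m12 = M$1$2"
  define m13 where "m13 = M$1$3"
  define m22 where "m22 = M$2$2"
  define m23 where "m23 = M$2$3"
  define m33 where "m33 = M$3$3"
  have s21: "M$2$1 = M$1$2" and s31: "M$3$1 = M$1$3" and s32: "M$3$2 = M$2$3" using sym by auto
  define ra where "ra = real \<alpha>"
  have ra0: "ra > 0" using A(1) unfolding ra_def by simp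
  have hq: "h (Psi t \<phi>) = (m11 * cos (ra*t)^2 - 2 * m12 * cos (ra*t) * sin (ra*t) * cos (real \<beta> * \<phi>)
    - 2 * m13 * cos (ra*t) * sin (ra*t) * sin (real \<beta> * \<phi>)
    + m22 * sin (ra*t)^2 * cos (real \<beta> * \<phi>)^2 + 2 * m23 * sin (ra*t)^2 * cos (real \<beta> * \<phi>) * sin (real \<beta> * \<phi>)
    + m33 * sin (ra*t)^2 * sin (real \<beta> * \<phi>)^2 + C)" for t \<phi> :: real
    unfolding A(6) zab_quad[OF s21 s31 s32] m11_def m12_def m13_def m22_def m23_def m33_def ra_def by simp
  have dirD: "D (Kp (\<phi>::real)) = - 2 * ra * (m12 * cos (real \<beta> * \<phi>) + m13 * sin (real \<beta> * \<phi>))" for \<phi>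
    by (rule dir_deriv[OF hd hq quad_deriv])
  have z1: "D (matE 1 1 \<i>) = 0" and z2: "D (matE 2 2 \<i>) = 0"
    using diag_deriv[OF hd A(4)] by auto
  have gn: "norm (rgrad h (mat 1))^2 = (D (Kp 0)^2 + D (Kp (- pi/2))^2) / 2"
    by (rule grad_norm[OF hd z1 z2])
  define r where "r = sqrt (m12^2 + m13^2)"
  have r0: "r \<ge> 0" unfolding r_def by simp
  have G2: "norm (rgrad h (mat 1))^2 \<le> (2 * ra * r)^2"
  proof -
    define x where "x = cos (real \<beta> * (- pi/2))"
    define y where "y = sin (real \<beta> * (- pi/2))"
    have xy: "x^2 + y^2 = 1" unfolding x_def y_def by simp
    have cs: "(m12 * x + m13 * y)^2 \<le> m12^2 + m13^2"
    proof -
      have "(m12 * x + m13 * y)^2 + (m12 * y - m13 * x)^2 = (m12^2 + m13^2) * (x^2 + y^2)"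
        by algebra
      then have "(m12 * x + m13 * y)^2 + (m12 * y - m13 * x)^2 = m12^2 + m13^2" using xy by simp
      then show ?thesis using zero_le_power2[of "m12 * y - m13 * x"] by linarith
    qed
    have dK0: "D (Kp 0) = - 2 * ra * m12" using dirD[of 0] by simp
    have dK1: "D (Kp (- pi/2)) = - 2 * ra * (m12 * x + m13 * y)" using dirD[of "- pi/2"] unfolding x_def y_def by simp
    have "norm (rgrad h (mat 1))^2 = (4 * ra^2 * m12^2 + 4 * ra^2 * (m12 * x + m13 * y)^2) / 2"
      unfolding gn dK0 dK1 by (simp add: power2_eq_square algebra_simps)
    also have "\<dots> \<le> (4 * ra^2 * (m12^2 + m13^2) + 4 * ra^2 * (m12^2 + m13^2)) / 2"
      using cs by (intro divide_right_mono add_mono mult_left_mono) auto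
    also have "\<dots> = (2 * ra * r)^2" unfolding r_def by (simp add: power2_eq_square algebra_simps)
    finally show ?thesis .
  qed
  have Gb: "norm (rgrad h (mat 1)) \<le> 2 * ra * r"
    using G2 ra0 r0 by (metis power2_le_imp_le mult_nonneg_nonneg less_imp_le zero_le_numeral)
  define c where "c = cos (ra * \<theta>s)"
  define s where "s = sin (ra * \<theta>s)"
  define a where "a = cos (real \<beta> * \<phi>s)"
  define b where "b = sin (real \<beta> * \<phi>s)"
  have w1: "w$1 = c" and w2: "w$2 = - s * a" and w3: "w$3 = - s * b"
    using A(17) unfolding zab_def c_def s_def a_def b_def ra_def by auto
  have at: "ra * \<theta>s \<le> pi / 2"
    using A(16) ra0 unfolding ra_def by (simp add: field_simps)
  have at0: "ra * \<theta>s \<ge> 0" using ra0 A(15) by simp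
  have cos_le: "cos (ra * \<theta>s) \<le> cos \<theta>s"
  proof (rule cos_monotone_0_pi_le)
    show "0 \<le> \<theta>s" by (rule A(15))
    show "\<theta>s \<le> ra * \<theta>s" using A(1) A(15) unfolding ra_def by (simp add: mult_le_cancel_right1)
    show "ra * \<theta>s \<le> pi" using at pi_gt_zero by linarith
  qed
  have c1: "c \<le> 1" unfolding c_def by simp
  have Pb: "norm (Psi \<theta>s \<phi>s - mat 1) \<le> 2 * sqrt (1 - c)"
  proof -
    have "norm (Psi \<theta>s \<phi>s - mat 1)^2 \<le> (2 * sqrt (1 - c))^2"
      unfolding Psi_dist using cos_le c1 unfolding c_def by (simp add: power_mult_distrib)
    then show ?thesis by (rule power2_le_imp_le) (use c1 in simp)
  qed
  have ev: "(M *v w) $ i = l1 * w $ i" for i using A(12) by simp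
  have e1: "m11 * c - m12 * s * a - m13 * s * b = l1 * c"
    using ev[of 1] unfolding matrix_vector_mult_def sum_3 w1 w2 w3 m11_def m12_def m13_def by (simp add: algebra_simps)
  have e2: "m12 * c - m22 * s * a - m23 * s * b = - l1 * s * a"
    using ev[of 2] unfolding matrix_vector_mult_def sum_3 w1 w2 w3 m12_def m22_def m23_def by (simp add: algebra_simps s21)
  have e3: "m13 * c - m23 * s * a - m33 * s * b = - l1 * s * b"
    using ev[of 3] unfolding matrix_vector_mult_def sum_3 w1 w2 w3 m13_def m23_def m33_def by (simp add: algebra_simps s31 s32)
  have hcs: "c^2 + s^2 = 1" unfolding c_def s_def by simp
  have hab: "a^2 + b^2 = 1" unfolding a_def b_def by simp
  have det: "(m11-t) * (m22-t) * (m33-t) + m12 * m23 * m13 + m13 * m12 * m23 - (m11-t) * m23 * m23 - m12 * m12 * (m33-t) - m13 * (m22-t) * m13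
      = (l1-t) * (l2-t) * (l3-t)" for t
    using A(7)[of t] unfolding det_3 m11_def m12_def m13_def m22_def m23_def m33_def
    by (simp add: mat_def s21 s31 s32)
  have c0: "c \<ge> 0" using A(14) w1 by simp
  have cr: "l1 - m11 \<ge> 0 \<and> (l1 - m11)^2 \<ge> \<epsilon>^2 * (m12^2 + m13^2) * (1 - c)"
    by (rule core[OF e1 e2 e3 hcs hab det A(8) A(9) A(10) A(11) c0])
  have key: "\<epsilon> * r * sqrt (1 - c) \<le> l1 - m11"
  proof -
    have "\<epsilon> * r * sqrt (1 - c) = sqrt (\<epsilon>^2 * (m12^2 + m13^2) * (1 - c))"
      unfolding r_def using A(10) by (simp add: real_sqrt_mult)
    also have "\<dots> \<le> sqrt ((l1 - m11)^2)" using cr by (intro real_sqrt_le_mono) simp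
    also have "\<dots> = l1 - m11" using cr by simp
    finally show ?thesis .
  qed
  have hPs: "h (Psi \<theta>s \<phi>s) = l1 + C"
  proof -
    have "w \<bullet> w = 1" using A(13) by (simp add: power2_norm_eq_inner[symmetric])
    then show ?thesis using A(6)[of \<theta>s \<phi>s] A(12) A(17) by simp
  qed
  have hI: "h (mat 1) = m11 + C" using hq[of 0 0] by (simp add: Psi_00)
  have "\<epsilon> / (4 * real \<alpha>) * norm (rgrad h (mat 1)) * norm (Psi \<theta>s \<phi>s - mat 1)
      \<le> \<epsilon> / (4 * ra) * (2 * ra * r) * (2 * sqrt (1 - c))"
    unfolding ra_def[symmetric] using Gb Pb A(10) ra0 r0
    by (intro mult_mono mult_left_mono) auto
  also have "\<dots> = \<epsilon> * r * sqrt (1 - c)" using ra0 by (simp add: field_simps)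
  also have "\<dots> \<le> h (Psi \<theta>s \<phi>s) - h (mat 1)" using key hPs hI by simp
  finally show ?thesis .
qed

end
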